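(* Let $\mathcal{R}(z)$ be the stability function of the InDC method constructed with stiffly accurate IRK methods with nonsingular coefficient matrices $A$, using $M$ uniform quadrature points per step excluding the left-most point. Then $\lim_{|z|\to\infty}\mathcal{R}(z)=0$. Consequently, the method is $L$-stable if it is $A$-stable.
   Context: InDC method for an ODE $y'=F(y)$ over one step $[t_n,t_n+H]$: nodes $\tau_m=t_n+mh$, $h=H/M$, $m=0,\dots,M$; $\alpha_j$ ($j=1,\dots,M$) the Lagrange basis polynomials of degree $M-1$ for $\tau_1,\dots,\tau_M$; $S^m(\bar w)=\frac1h\sum_jw_j\int_{\tau_m}^{\tau_{m+1}}\alpha_j$, $S^{c_{mi}}(\bar w)=\frac1h\sum_jw_j\int_{\tau_m}^{\tau_m+c_ih}\alpha_j$, $P^{c_{mi}}(\bar w)=\sum_jw_j\alpha_j(\tau_m+c_ih)$. Prediction: an IRK method (tableau $A,b,c$) applied with step $h$ on each substep from $y_n$, giving $y^{(0)}_m$. Correction $k$: $y^{(k)}_0=y_n$ and $Y_{mi}=y^{(k)}_m+hS^{c_{mi}}(\bar F^{(k-1)})+h\sum_ja_{ij}\Delta K_{mj}$, $y^{(k)}_{m+1}=y^{(k)}_m+hS^m(\bar F^{(k-1)})+h\sum_ib_i\Delta K_{mi}$, $\Delta K_{mi}=F(Y_{mi})-P^{c_{mi}}(\bar F^{(k-1)})$, $\bar F^{(k-1)}=(F(y^{(k-1)}_j))_{j=1}^M$; output $y_{n+1}=y^{(K)}_M$. The stability function $\mathcal{R}$ is defined by $y_{n+1}=\mathcal{R}(z)y_n$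 when the method is applied to $y'=\lambda y$, with $z=\lambda H$ (equivalently up to rescaling $z=\lambda h$). Stiffly accurate: $b^T=e_s^TA$. $L$-stable: $A$-stable with $\mathcal{R}(z)\to0$ as $|z|\to\infty$. *)

theory Defs
  imports "HOL-Analysis.Interval_Integral" "Jordan_Normal_Form.Determinant"
begin

text \<open>Normalisation: t_n = 0, substep h = 1, nodes tau_m = m (m = 0..M).
  The quantities S, P are invariant under this rescaling; zeta = lambda h.\<close>

definition lagr :: "nat \<Rightarrow> nat \<Rightarrow> real \<Rightarrow> real" where
  "lagr M j t = (\<Prod>l\<in>{1..M} - {j}. (t - real l) / (real j - real l))"

definition lagr_int :: "nat \<Rightarrow> nat \<Rightarrow> real \<Rightarrow> real \<Rightarrow> real" where
  "lagr_int M j a b = (LBINT t=ereal a..ereal b. lagr M j t)"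

definition stages :: "nat \<Rightarrow> (nat \<Rightarrow> nat \<Rightarrow> real) \<Rightarrow> (nat \<Rightarrow> complex) \<Rightarrow> complex \<Rightarrow> nat \<Rightarrow> complex" where
  "stages s A r \<zeta> = (THE Y. (\<forall>i<s. Y i = r i + \<zeta> * (\<Sum>j<s. of_real (A i j) * Y j))
                          \<and> (\<forall>i\<ge>s. Y i = 0))"

text \<open>One IRK step of step size h applied to y' = lambda y (zeta = lambda h).\<close>
definition irk_step :: "nat \<Rightarrow> (nat \<Rightarrow> nat \<Rightarrow> real) \<Rightarrow> (nat \<Rightarrow> real) \<Rightarrow> complex \<Rightarrow> complex \<Rightarrow> complex" where
  "irk_step s A b \<zeta> y = (let Y = stages s A (\<lambda>_. y) \<zeta> in y + \<zeta> * (\<Sum>i<s. of_real (b i) * Y i))"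

text \<open>One correction substep m, given the previous iterate yp (yp j = y^(k-1)_j)
  and the current value y = y^(k)_m; returns y^(k)_(m+1).  Here Fb j = h F(y^(k-1)_j).\<close>
definition corr_step :: "nat \<Rightarrow> (nat \<Rightarrow> nat \<Rightarrow> real) \<Rightarrow> (nat \<Rightarrow> real) \<Rightarrow> (nat \<Rightarrow> real) \<Rightarrow> nat
     \<Rightarrow> complex \<Rightarrow> (nat \<Rightarrow> complex) \<Rightarrow> nat \<Rightarrow> complex \<Rightarrow> complex" where
  "corr_step s A b c M \<zeta> yp m y =
    (let Fb = (\<lambda>j. \<zeta> * yp j);
         Sm = (\<Sum>j=1..M. Fb j * of_real (lagr_int M j (real m) (real m + 1)));
         Sc = (\<lambda>i. \<Sum>j=1..M. Fb j * of_real (lagr_int M j (real m) (real m + c i)));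
         Pc = (\<lambda>i. \<Sum>j=1..M. Fb j * of_real (lagr M j (real m + c i)));
         Y = stages s A (\<lambda>i. y + Sc i - (\<Sum>j<s. of_real (A i j) * Pc j)) \<zeta>
     in y + Sm + (\<Sum>i<s. of_real (b i) * (\<zeta> * Y i - Pc i)))"

fun corr_sweep :: "nat \<Rightarrow> (nat \<Rightarrow> nat \<Rightarrow> real) \<Rightarrow> (nat \<Rightarrow> real) \<Rightarrow> (nat \<Rightarrow> real) \<Rightarrow> nat
     \<Rightarrow> complex \<Rightarrow> (nat \<Rightarrow> complex) \<Rightarrow> nat \<Rightarrow> complex" where
  "corr_sweep s A b c M \<zeta> yp 0 = 1"
| "corr_sweep s A b c M \<zeta> yp (Suc m) =
     corr_step s A b c M \<zeta> yp m (corr_sweep s A b c M \<zeta> yp m)"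

text \<open>Iterate k: indc_iter ... k m = y^(k)_m, with y_n = 1.\<close>
fun indc_iter :: "nat \<Rightarrow> (nat \<Rightarrow> nat \<Rightarrow> real) \<Rightarrow> (nat \<Rightarrow> real) \<Rightarrow> (nat \<Rightarrow> real) \<Rightarrow> nat
     \<Rightarrow> complex \<Rightarrow> nat \<Rightarrow> nat \<Rightarrow> complex" where
  "indc_iter s A b c M \<zeta> 0 = (\<lambda>m. (irk_step s A b \<zeta> ^^ m) 1)"
| "indc_iter s A b c M \<zeta> (Suc k) = corr_sweep s A b c M \<zeta> (indc_iter s A b c M \<zeta> k)"

text \<open>Stability function R(z), z = lambda H, H = M h, so zeta = lambda h = z / M;
  output y_(n+1) = y^(K)_M for y_n = 1.\<close>
definition indc_R :: "nat \<Rightarrow> (nat \<Rightarrow> nat \<Rightarrow> real) \<Rightarrow> (nat \<Rightarrow> real) \<Rightarrow> (nat \<Rightarrow> real) \<Rightarrow> nat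
     \<Rightarrow> nat \<Rightarrow> complex \<Rightarrow> complex" where
  "indc_R s A b c M K z = indc_iter s A b c M (z / of_nat M) K M"

definition A_stable :: "(complex \<Rightarrow> complex) \<Rightarrow> bool" where
  "A_stable R \<longleftrightarrow> (\<forall>z. Re z \<le> 0 \<longrightarrow> cmod (R z) \<le> 1)"

definition L_stable :: "(complex \<Rightarrow> complex) \<Rightarrow> bool" where
  "L_stable R \<longleftrightarrow> A_stable R \<and> (R \<longlongrightarrow> 0) at_infinity"

end

theory Submission
  imports Defs
begin

lemma sys_bound:
  fixes A B :: "nat\<Rightarrow>nat\<Rightarrow>real" and Y r :: "nat \<Rightarrow> complex"
  assumes BA: "\<forall>i<s. \<forall>j<s. (\<Sum>k<s. B i k * A k j) = (if i = j then 1 else 0)"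
    and sys: "\<forall>i<s. Y i = r i + \<zeta> * (\<Sum>j<s. of_real (A i j) * Y j)"
  shows "cmod \<zeta> * (\<Sum>i<s. cmod (Y i)) \<le> (\<Sum>i<s. \<Sum>k<s. \<bar>B i k\<bar>) * ((\<Sum>i<s. cmod (Y i)) + (\<Sum>i<s. cmod (r i)))"
proof -
  let ?NY = "\<Sum>i<s. cmod (Y i)" and ?Nr = "\<Sum>i<s. cmod (r i)"
  have eq: "\<zeta> * Y i = (\<Sum>k<s. of_real (B i k) * (Y k - r k))" if i: "i<s" for i
  proof -
    have "(\<Sum>k<s. of_real (B i k) * (Y k - r k)) = (\<Sum>k<s. of_real (B i k) * (\<zeta> * (\<Sum>j<s. of_real (A k j) * Y j)))"
      using sys by (intro sum.cong) (auto simp: algebra_simps)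
    also have "\<dots> = \<zeta> * (\<Sum>k<s. \<Sum>j<s. of_real (B i k) * of_real (A k j) * Y j)"
      by (simp add: sum_distrib_left mult_ac)
    also have "\<dots> = \<zeta> * (\<Sum>j<s. (\<Sum>k<s. of_real (B i k) * of_real (A k j)) * Y j)"
      by (subst sum.swap) (simp add: sum_distrib_right)
    also have "\<dots> = \<zeta> * (\<Sum>j<s. of_real (if i = j then 1 else 0) * Y j)"
      using BA i by (intro arg_cong[where f="\<lambda>x. \<zeta> * x"] sum.cong refl) (simp flip: of_real_mult of_real_sum)
    also have "\<dots> = \<zeta> * (\<Sum>j<s. (if i = j then Y j else 0))"
      by (intro arg_cong[where f="\<lambda>x. \<zeta> * x"] sum.cong refl) auto
    also have "\<dots> = \<zeta> * Y i" using i by simp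
    finally show ?thesis by simp
  qed
  have bi: "cmod \<zeta> * cmod (Y i) \<le> (\<Sum>k<s. \<bar>B i k\<bar>) * (?NY + ?Nr)" if i: "i<s" for i
  proof -
    have "cmod \<zeta> * cmod (Y i) = cmod (\<Sum>k<s. of_real (B i k) * (Y k - r k))"
      using eq[OF i] by (metis norm_mult)
    also have "\<dots> \<le> (\<Sum>k<s. cmod (of_real (B i k) * (Y k - r k)))" by (rule norm_sum)
    also have "\<dots> \<le> (\<Sum>k<s. \<bar>B i k\<bar> * (?NY + ?Nr))"
    proof (intro sum_mono)
      fix k assume k: "k \<in> {..<s}"
      have "cmod (Y k - r k) \<le> cmod (Y k) + cmod (r k)" by (rule norm_triangle_ineq4)
      also have "\<dots> \<le> ?NY + ?Nr"
        using k by (intro add_mono member_le_sum) auto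
      finally show "cmod (of_real (B i k) * (Y k - r k)) \<le> \<bar>B i k\<bar> * (?NY + ?Nr)"
        by (simp add: norm_mult mult_left_mono)
    qed
    also have "\<dots> = (\<Sum>k<s. \<bar>B i k\<bar>) * (?NY + ?Nr)" by (simp add: sum_distrib_right)
    finally show ?thesis .
  qed
  have "cmod \<zeta> * ?NY = (\<Sum>i<s. cmod \<zeta> * cmod (Y i))" by (simp add: sum_distrib_left)
  also have "\<dots> \<le> (\<Sum>i<s. (\<Sum>k<s. \<bar>B i k\<bar>) * (?NY + ?Nr))" by (intro sum_mono bi) auto
  also have "\<dots> = (\<Sum>i<s. \<Sum>k<s. \<bar>B i k\<bar>) * (?NY + ?Nr)" by (simp add: sum_distrib_right)
  finally show ?thesis .
qed

lemma sys_bound2: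
  fixes A B :: "nat\<Rightarrow>nat\<Rightarrow>real" and Y r :: "nat \<Rightarrow> complex"
  assumes BA: "\<forall>i<s. \<forall>j<s. (\<Sum>k<s. B i k * A k j) = (if i = j then 1 else 0)"
    and sys: "\<forall>i<s. Y i = r i + \<zeta> * (\<Sum>j<s. of_real (A i j) * Y j)"
    and z: "cmod \<zeta> \<ge> 2 * (\<Sum>i<s. \<Sum>k<s. \<bar>B i k\<bar>) + 1"
  shows "(\<Sum>i<s. cmod (Y i)) \<le> 2 * (\<Sum>i<s. \<Sum>k<s. \<bar>B i k\<bar>) * (\<Sum>i<s. cmod (r i)) / cmod \<zeta>"
proof -
  define \<beta> where "\<beta> = (\<Sum>i<s. \<Sum>k<s. \<bar>B i k\<bar>)"
  let ?NY = "\<Sum>i<s. cmod (Y i)" and ?Nr = "\<Sum>i<s. cmod (r i)"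
  have b0: "\<beta> \<ge> 0" unfolding \<beta>_def by (intro sum_nonneg) auto
  have NY0: "?NY \<ge> 0" by (intro sum_nonneg) auto
  have h: "cmod \<zeta> * ?NY \<le> \<beta> * ?NY + \<beta> * ?Nr"
    using sys_bound[OF BA sys] unfolding \<beta>_def by (simp add: algebra_simps)
  have "\<beta> * ?NY \<le> (cmod \<zeta> / 2) * ?NY" using z NY0 unfolding \<beta>_def[symmetric]
    by (intro mult_right_mono) auto
  with h have "(cmod \<zeta> / 2) * ?NY \<le> \<beta> * ?Nr" by linarith
  moreover have zp: "cmod \<zeta> > 0" using z b0 unfolding \<beta>_def[symmetric] by linarith
  ultimately show ?thesis unfolding \<beta>_def[symmetric]
    by (simp add: pos_le_divide_eq field_simps)
qed

definition Cmat :: "nat \<Rightarrow> (nat \<Rightarrow> nat \<Rightarrow> real) \<Rightarrow> complex \<Rightarrow> complex mat" where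
  "Cmat s A \<zeta> = Matrix.mat s s (\<lambda>(i,j). (if i = j then 1 else 0) - \<zeta> * of_real (A i j))"

lemma Cmat_carrier: "Cmat s A \<zeta> \<in> carrier_mat s s" unfolding Cmat_def by simp

lemma Cmat_mult: assumes v: "v \<in> carrier_vec s" and i: "i < s"
  shows "(Cmat s A \<zeta> *\<^sub>v v) $ i = v $ i - \<zeta> * (\<Sum>j<s. of_real (A i j) * v $ j)"
proof -
  have "(Cmat s A \<zeta> *\<^sub>v v) $ i = (\<Sum>j<s. ((if i = j then 1 else 0) - \<zeta> * of_real (A i j)) * v $ j)"
    using v i by (simp add: Cmat_def scalar_prod_def atLeast0LessThan)
  also have "\<dots> = (\<Sum>j<s. (if i = j then v $ j else 0)) - \<zeta> * (\<Sum>j<s. of_real (A i j) * v $ j)"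
  proof -
    have "(\<Sum>j<s. ((if i = j then 1 else 0) - \<zeta> * of_real (A i j)) * v $ j)
        = (\<Sum>j<s. (if i = j then v $ j else 0) - \<zeta> * (of_real (A i j) * v $ j))"
      by (intro sum.cong) (auto simp: algebra_simps)
    then show ?thesis by (simp add: sum_subtractf sum_distrib_left)
  qed
  also have "\<dots> = v $ i - \<zeta> * (\<Sum>j<s. of_real (A i j) * v $ j)" using i by simp
  finally show ?thesis .
qed

lemma stages_props:
  fixes A B :: "nat\<Rightarrow>nat\<Rightarrow>real" and r :: "nat \<Rightarrow> complex"
  assumes BA: "\<forall>i<s. \<forall>j<s. (\<Sum>k<s. B i k * A k j) = (if i = j then 1 else 0)"
    and z: "cmod \<zeta> \<ge> 2 * (\<Sum>i<s. \<Sum>k<s. \<bar>B i k\<bar>) + 1"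
  shows "\<forall>i<s. stages s A r \<zeta> i = r i + \<zeta> * (\<Sum>j<s. of_real (A i j) * stages s A r \<zeta> j)"
    and "(\<Sum>i<s. cmod (stages s A r \<zeta> i)) \<le> 2 * (\<Sum>i<s. \<Sum>k<s. \<bar>B i k\<bar>) * (\<Sum>i<s. cmod (r i)) / cmod \<zeta>"
proof -
  let ?P = "\<lambda>Y. (\<forall>i<s. Y i = r i + \<zeta> * (\<Sum>j<s. of_real (A i j) * Y j)) \<and> (\<forall>i\<ge>s. Y i = 0)"
  let ?C = "Cmat s A \<zeta>"
  have zp: "cmod \<zeta> > 0" using z by (smt (verit) sum_nonneg abs_ge_zero)
  have dC: "det ?C \<noteq> 0"
  proof
    assume "det ?C = 0"
    then obtain v where v: "v \<in> carrier_vec s" "v \<noteq> 0\<^sub>v s" "?C *\<^sub>v v = 0\<^sub>v s"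
      using det_0_iff_vec_prod_zero_field[OF Cmat_carrier] by blast
    have sys: "\<forall>i<s. v $ i = 0 + \<zeta> * (\<Sum>j<s. of_real (A i j) * v $ j)"
    proof (intro allI impI)
      fix i assume i: "i < s"
      have "(?C *\<^sub>v v) $ i = 0" using v(3) i by simp
      then show "v $ i = 0 + \<zeta> * (\<Sum>j<s. of_real (A i j) * v $ j)"
        using Cmat_mult[OF v(1) i] by simp
    qed
    have "(\<Sum>i<s. cmod (v $ i)) \<le> 0"
      using sys_bound2[OF BA sys z] by simp
    then have "(\<Sum>i<s. cmod (v $ i)) = 0" proof -
      have "0 \<le> (\<Sum>i<s. cmod (v $ i))" by (intro sum_nonneg) simp
      with \<open>(\<Sum>i<s. cmod (v $ i)) \<le> 0\<close> show ?thesis by linarith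
    qed
    then have "\<forall>i\<in>{..<s}. cmod (v $ i) = 0"
      by (subst sum_nonneg_eq_0_iff[symmetric]) auto
    then have "v = 0\<^sub>v s" using v(1) by (intro eq_vecI) auto
    with v(2) show False by simp
  qed
  from det_non_zero_imp_unit[OF Cmat_carrier dC, unfolded Units_def, of "()"]
  obtain D where D: "D \<in> carrier_mat s s" and CD: "?C * D = 1\<^sub>m s"
    by (auto simp: ring_mat_def)
  define w where "w = D *\<^sub>v Matrix.vec s r"
  have w: "w \<in> carrier_vec s" unfolding w_def using D by simp
  have Cw: "?C *\<^sub>v w = Matrix.vec s r"
  proof -
    have "?C *\<^sub>v (D *\<^sub>v Matrix.vec s r) = (?C * D) *\<^sub>v Matrix.vec s r"
      using D Cmat_carrier[of s A \<zeta>] by (intro assoc_mult_mat_vec[symmetric]) auto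
    then show ?thesis unfolding w_def CD by simp
  qed
  define Y where "Y = (\<lambda>i. if i < s then w $ i else 0)"
  have PY: "?P Y"
  proof (intro conjI allI impI)
    fix i assume i: "i < s"
    have "(?C *\<^sub>v w) $ i = r i" using Cw i by simp
    then have e1: "w $ i - \<zeta> * (\<Sum>j<s. of_real (A i j) * w $ j) = r i" by (simp only: Cmat_mult[OF w i])
    have sw: "(\<Sum>j<s. of_real (A i j) * w $ j) = (\<Sum>j<s. of_real (A i j) * Y j)"
      unfolding Y_def by (intro sum.cong) auto
    then show "Y i = r i + \<zeta> * (\<Sum>j<s. of_real (A i j) * Y j)" 
    proof -
      have "Y i = w $ i" using i by (simp add: Y_def)
      with e1 sw show ?thesis by (simp add: algebra_simps)
    qed
  qed (simp add: Y_def)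
  have uniq: "Y' = Y" if PY': "?P Y'" for Y'
  proof -
    have sys: "\<forall>i<s. (Y' i - Y i) = 0 + \<zeta> * (\<Sum>j<s. of_real (A i j) * (Y' j - Y j))"
    proof (intro allI impI)
      fix i assume i: "i < s"
      have "Y' i - Y i = \<zeta> * (\<Sum>j<s. of_real (A i j) * Y' j) - \<zeta> * (\<Sum>j<s. of_real (A i j) * Y j)"
        using PY' PY i by auto
      also have "\<dots> = \<zeta> * (\<Sum>j<s. of_real (A i j) * (Y' j - Y j))"
        by (simp add: algebra_simps sum_subtractf)
      finally show "(Y' i - Y i) = 0 + \<zeta> * (\<Sum>j<s. of_real (A i j) * (Y' j - Y j))" by simp
    qed
    have le: "(\<Sum>i<s. cmod (Y' i - Y i)) \<le> 0"
      using sys_bound2[OF BA sys z] by simp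
    have "0 \<le> (\<Sum>i<s. cmod (Y' i - Y i))" by (intro sum_nonneg) simp
    with le have "(\<Sum>i<s. cmod (Y' i - Y i)) = 0" by linarith
    then have "\<forall>i\<in>{..<s}. cmod (Y' i - Y i) = 0"
      by (subst sum_nonneg_eq_0_iff[symmetric]) auto
    then have "\<forall>i<s. Y' i = Y i" by auto
    moreover have "\<forall>i\<ge>s. Y' i = Y i" using PY PY' by auto
    ultimately show ?thesis by (intro ext) (meson not_le)
  qed
  have SY: "stages s A r \<zeta> = Y" unfolding stages_def
    by (rule the_equality) (rule PY, rule uniq)
  then show "\<forall>i<s. stages s A r \<zeta> i = r i + \<zeta> * (\<Sum>j<s. of_real (A i j) * stages s A r \<zeta> j)"
    using PY by simp
  have "\<forall>i<s. Y i = r i + \<zeta> * (\<Sum>j<s. of_real (A i j) * Y j)" using PY by blast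
  from sys_bound2[OF BA this z] SY
  show "(\<Sum>i<s. cmod (stages s A r \<zeta> i)) \<le> 2 * (\<Sum>i<s. \<Sum>k<s. \<bar>B i k\<bar>) * (\<Sum>i<s. cmod (r i)) / cmod \<zeta>"
    by simp
qed

lemma left_inv:
  fixes A :: "nat \<Rightarrow> nat \<Rightarrow> real"
  assumes "Determinant.det (Matrix.mat s s (\<lambda>(i, j). A i j)) \<noteq> 0"
  shows "\<exists>B. \<forall>i<s. \<forall>j<s. (\<Sum>k<s. B i k * A k j) = (if i = j then 1 else 0)"
proof -
  let ?A = "Matrix.mat s s (\<lambda>(i, j). A i j)"
  have Ac: "?A \<in> carrier_mat s s" by simp
  from det_non_zero_imp_unit[OF Ac assms, unfolded Units_def, of "()"]
  obtain Bm where Bm: "Bm \<in> carrier_mat s s" and BA: "Bm * ?A = 1\<^sub>m s"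
    by (auto simp: ring_mat_def)
  show ?thesis
  proof (intro exI allI impI)
    fix i j assume i: "i < s" and j: "j < s"
    have "(Bm * ?A) $$ (i, j) = (if i = j then 1 else 0)" using BA i j by simp
    moreover have "(Bm * ?A) $$ (i, j) = (\<Sum>k<s. Bm $$ (i, k) * A k j)"
      using Bm i j by (simp add: scalar_prod_def atLeast0LessThan)
    ultimately show "(\<Sum>k<s. Bm $$ (i, k) * A k j) = (if i = j then 1 else 0)" by simp
  qed
qed

lemma ev_big: "eventually (\<lambda>\<zeta>::complex. cmod \<zeta> \<ge> c) at_infinity"
  unfolding eventually_at_infinity by auto

lemma stage_lim:
  fixes A B :: "nat\<Rightarrow>nat\<Rightarrow>real" and r :: "complex \<Rightarrow> nat \<Rightarrow> complex"
  assumes BA: "\<forall>i<s. \<forall>j<s. (\<Sum>k<s. B i k * A k j) = (if i = j then 1 else 0)"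
    and s: "s \<ge> 1"
    and lim: "\<forall>i<s. ((\<lambda>\<zeta>. r \<zeta> i / \<zeta>) \<longlongrightarrow> 0) at_infinity"
  shows "((\<lambda>\<zeta>. stages s A (r \<zeta>) \<zeta> (s - 1)) \<longlongrightarrow> 0) at_infinity"
proof (rule Lim_null_comparison)
  define \<beta> where "\<beta> = (\<Sum>i<s. \<Sum>k<s. \<bar>B i k\<bar>)"
  show "eventually (\<lambda>\<zeta>. norm (stages s A (r \<zeta>) \<zeta> (s - 1)) \<le> 2 * \<beta> * (\<Sum>i<s. cmod (r \<zeta> i / \<zeta>))) at_infinity"
    using ev_big[of "2 * \<beta> + 1"]
  proof eventually_elim
    case (elim \<zeta>)
    have "norm (stages s A (r \<zeta>) \<zeta> (s - 1)) \<le> (\<Sum>i<s. cmod (stages s A (r \<zeta>) \<zeta> i))"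
      using s by (intro member_le_sum) auto
    also have "\<dots> \<le> 2 * \<beta> * (\<Sum>i<s. cmod (r \<zeta> i)) / cmod \<zeta>"
      using stages_props(2)[OF BA, of \<zeta> "r \<zeta>"] elim unfolding \<beta>_def by simp
    also have "\<dots> = 2 * \<beta> * (\<Sum>i<s. cmod (r \<zeta> i / \<zeta>))"
      by (simp add: norm_divide sum_divide_distrib[symmetric])
    finally show ?case .
  qed
  have "((\<lambda>\<zeta>. \<Sum>i<s. cmod (r \<zeta> i / \<zeta>)) \<longlongrightarrow> (\<Sum>i<s. 0)) at_infinity"
    using lim by (intro tendsto_sum tendsto_norm_zero) auto
  from tendsto_mult[OF tendsto_const[of "2 * \<beta>"] this]
  show "((\<lambda>\<zeta>. 2 * \<beta> * (\<Sum>i<s. cmod (r \<zeta> i / \<zeta>))) \<longlongrightarrow> 0) at_infinity" by simp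
qed

lemma irk_eq:
  assumes s: "s \<ge> 1" and SA: "\<forall>i<s. b i = A (s - 1) i"
    and sys: "\<forall>i<s. stages s A (\<lambda>_. y) \<zeta> i = y + \<zeta> * (\<Sum>j<s. of_real (A i j) * stages s A (\<lambda>_. y) \<zeta> j)"
  shows "irk_step s A b \<zeta> y = stages s A (\<lambda>_. y) \<zeta> (s - 1)"
proof -
  have "(\<Sum>i<s. of_real (b i) * stages s A (\<lambda>_. y) \<zeta> i) = (\<Sum>j<s. of_real (A (s - 1) j) * stages s A (\<lambda>_. y) \<zeta> j)"
    using SA by (intro sum.cong) auto
  then show ?thesis using sys s unfolding irk_step_def Let_def
    by (metis diff_less less_numeral_extra(1) order_less_le_trans)
qed

definition Rfun :: "nat \<Rightarrow> (nat \<Rightarrow> nat \<Rightarrow> real) \<Rightarrow> (nat \<Rightarrow> real) \<Rightarrow> nat \<Rightarrow> complex \<Rightarrow> (nat \<Rightarrow> complex) \<Rightarrow> nat \<Rightarrow> complex \<Rightarrow> nat \<Rightarrow> complex" where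
  "Rfun s A c M \<zeta> yp m y = (\<lambda>i. y + (\<Sum>j=1..M. \<zeta> * yp j * of_real (lagr_int M j (real m) (real m + c i)))
      - (\<Sum>j<s. of_real (A i j) * (\<Sum>l=1..M. \<zeta> * yp l * of_real (lagr M l (real m + c j)))))"

definition Ufun :: "nat \<Rightarrow> (nat \<Rightarrow> nat \<Rightarrow> real) \<Rightarrow> (nat \<Rightarrow> real) \<Rightarrow> nat \<Rightarrow> (nat \<Rightarrow> complex) \<Rightarrow> nat \<Rightarrow> nat \<Rightarrow> complex" where
  "Ufun s A c M yp m = (\<lambda>i. (\<Sum>j=1..M. yp j * of_real (lagr_int M j (real m) (real m + c i)))
      - (\<Sum>j<s. of_real (A i j) * (\<Sum>l=1..M. yp l * of_real (lagr M l (real m + c j)))))"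

lemma Rfun_U: "Rfun s A c M \<zeta> yp m y i = y + \<zeta> * Ufun s A c M yp m i"
proof -
  have e: "(\<Sum>j<s. of_real (A i j) * (\<Sum>l=1..M. \<zeta> * yp l * of_real (lagr M l (real m + c j))))
     = \<zeta> * (\<Sum>j<s. of_real (A i j) * (\<Sum>l=1..M. yp l * of_real (lagr M l (real m + c j))))"
    unfolding sum_distrib_left by (intro sum.cong refl) (simp add: mult_ac)
  have f: "(\<Sum>j=1..M. \<zeta> * yp j * of_real (lagr_int M j (real m) (real m + c i)))
     = \<zeta> * (\<Sum>j=1..M. yp j * of_real (lagr_int M j (real m) (real m + c i)))"
    unfolding sum_distrib_left by (intro sum.cong refl) (simp add: mult_ac)
  show ?thesis unfolding Rfun_def Ufun_def e f by (simp add: right_diff_distrib)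
qed

lemma corr_eq:
  assumes s: "s \<ge> 1" and SA: "\<forall>i<s. b i = A (s - 1) i" and c1: "c (s - 1) = 1"
    and sys: "\<forall>i<s. stages s A (Rfun s A c M \<zeta> yp m y) \<zeta> i = Rfun s A c M \<zeta> yp m y i + \<zeta> * (\<Sum>j<s. of_real (A i j) * stages s A (Rfun s A c M \<zeta> yp m y) \<zeta> j)"
  shows "corr_step s A b c M \<zeta> yp m y = stages s A (Rfun s A c M \<zeta> yp m y) \<zeta> (s - 1)"
proof -
  define Y where "Y = stages s A (Rfun s A c M \<zeta> yp m y) \<zeta>"
  define Pc where "Pc = (\<lambda>i. \<Sum>j=1..M. \<zeta> * yp j * of_real (lagr M j (real m + c i)))"
  define Sm where "Sm = (\<Sum>j=1..M. \<zeta> * yp j * of_real (lagr_int M j (real m) (real m + 1)))"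
  have s1: "s - 1 < s" using s by simp
  have Rs: "Rfun s A c M \<zeta> yp m y (s - 1) = y + Sm - (\<Sum>j<s. of_real (b j) * Pc j)"
    unfolding Rfun_def Sm_def Pc_def c1 using SA by simp
  have bY: "(\<Sum>i<s. of_real (b i) * Y i) = (\<Sum>j<s. of_real (A (s - 1) j) * Y j)"
    using SA by (intro sum.cong) auto
  have "corr_step s A b c M \<zeta> yp m y = y + Sm + (\<Sum>i<s. of_real (b i) * (\<zeta> * Y i - Pc i))"
    unfolding corr_step_def Let_def Y_def Pc_def Sm_def Rfun_def by simp
  also have "\<dots> = y + Sm - (\<Sum>j<s. of_real (b j) * Pc j) + \<zeta> * (\<Sum>i<s. of_real (b i) * Y i)"
    by (simp add: algebra_simps sum_subtractf sum_distrib_left)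
  also have "\<dots> = Y (s - 1)"
    using sys[rule_format, OF s1] unfolding Y_def[symmetric] Rs bY by simp
  finally show ?thesis unfolding Y_def .
qed

lemma div_lim: "(f \<longlongrightarrow> c) at_infinity \<Longrightarrow> ((\<lambda>\<zeta>::complex. f \<zeta> / \<zeta>) \<longlongrightarrow> 0) at_infinity"
  by (rule tendsto_divide_0[OF _ filterlim_ident])

lemma irk_lim:
  fixes A B :: "nat\<Rightarrow>nat\<Rightarrow>real" and y :: "complex \<Rightarrow> complex"
  assumes BA: "\<forall>i<s. \<forall>j<s. (\<Sum>k<s. B i k * A k j) = (if i = j then 1 else 0)"
    and s: "s \<ge> 1" and SA: "\<forall>i<s. b i = A (s - 1) i"
    and hy: "((\<lambda>\<zeta>. y \<zeta> / \<zeta>) \<longlongrightarrow> 0) at_infinity"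
  shows "((\<lambda>\<zeta>. irk_step s A b \<zeta> (y \<zeta>)) \<longlongrightarrow> 0) at_infinity"
proof -
  have "((\<lambda>\<zeta>. stages s A (\<lambda>_. y \<zeta>) \<zeta> (s - 1)) \<longlongrightarrow> 0) at_infinity"
    using stage_lim[OF BA s, of "\<lambda>\<zeta> _. y \<zeta>"] hy by simp
  then show ?thesis
  proof (rule Lim_transform_eventually)
    show "\<forall>\<^sub>F \<zeta> in at_infinity. stages s A (\<lambda>_. y \<zeta>) \<zeta> (s - 1) = irk_step s A b \<zeta> (y \<zeta>)"
      using ev_big[of "2 * (\<Sum>i<s. \<Sum>k<s. \<bar>B i k\<bar>) + 1"]
    proof eventually_elim
      case (elim \<zeta>)
      show ?case using irk_eq[OF s SA stages_props(1)[OF BA elim]] by simp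
    qed
  qed
qed

lemma corr_lim:
  fixes A B :: "nat\<Rightarrow>nat\<Rightarrow>real" and y :: "complex \<Rightarrow> complex" and yp :: "complex \<Rightarrow> nat \<Rightarrow> complex"
  assumes BA: "\<forall>i<s. \<forall>j<s. (\<Sum>k<s. B i k * A k j) = (if i = j then 1 else 0)"
    and s: "s \<ge> 1" and SA: "\<forall>i<s. b i = A (s - 1) i" and c1: "c (s - 1) = 1"
    and hy: "((\<lambda>\<zeta>. y \<zeta> / \<zeta>) \<longlongrightarrow> 0) at_infinity"
    and hyp: "\<forall>j\<in>{1..M}. ((\<lambda>\<zeta>. yp \<zeta> j) \<longlongrightarrow> 0) at_infinity"
  shows "((\<lambda>\<zeta>. corr_step s A b c M \<zeta> (yp \<zeta>) m (y \<zeta>)) \<longlongrightarrow> 0) at_infinity"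
proof -
  have hr: "\<forall>i<s. ((\<lambda>\<zeta>. Rfun s A c M \<zeta> (yp \<zeta>) m (y \<zeta>) i / \<zeta>) \<longlongrightarrow> 0) at_infinity"
  proof (intro allI impI)
    fix i assume i: "i < s"
    have "((\<lambda>\<zeta>. Ufun s A c M (yp \<zeta>) m i) \<longlongrightarrow>
       (\<Sum>j=1..M. 0 * of_real (lagr_int M j (real m) (real m + c i)))
      - (\<Sum>j<s. of_real (A i j) * (\<Sum>l=1..M. 0 * of_real (lagr M l (real m + c j))))) at_infinity"
      unfolding Ufun_def using hyp by (intro tendsto_intros) auto
    then have hU: "((\<lambda>\<zeta>. Ufun s A c M (yp \<zeta>) m i) \<longlongrightarrow> 0) at_infinity" by simp
    have "((\<lambda>\<zeta>. y \<zeta> / \<zeta> + Ufun s A c M (yp \<zeta>) m i) \<longlongrightarrow> 0 + 0) at_infinity"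
      by (intro tendsto_add hy hU)
    then have h2: "((\<lambda>\<zeta>. y \<zeta> / \<zeta> + Ufun s A c M (yp \<zeta>) m i) \<longlongrightarrow> 0) at_infinity" by simp
    show "((\<lambda>\<zeta>. Rfun s A c M \<zeta> (yp \<zeta>) m (y \<zeta>) i / \<zeta>) \<longlongrightarrow> 0) at_infinity"
    proof (rule Lim_transform_eventually[OF h2])
      show "\<forall>\<^sub>F \<zeta> in at_infinity. y \<zeta> / \<zeta> + Ufun s A c M (yp \<zeta>) m i = Rfun s A c M \<zeta> (yp \<zeta>) m (y \<zeta>) i / \<zeta>"
        using ev_big[of 1]
      proof eventually_elim
        case (elim \<zeta>)
        then have "\<zeta> \<noteq> 0" by auto
        then show ?case unfolding Rfun_U by (simp add: field_simps)
      qed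
    qed
  qed
  have "((\<lambda>\<zeta>. stages s A (Rfun s A c M \<zeta> (yp \<zeta>) m (y \<zeta>)) \<zeta> (s - 1)) \<longlongrightarrow> 0) at_infinity"
    by (rule stage_lim[OF BA s hr])
  then show ?thesis
  proof (rule Lim_transform_eventually)
    show "\<forall>\<^sub>F \<zeta> in at_infinity. stages s A (Rfun s A c M \<zeta> (yp \<zeta>) m (y \<zeta>)) \<zeta> (s - 1) = corr_step s A b c M \<zeta> (yp \<zeta>) m (y \<zeta>)"
      using ev_big[of "2 * (\<Sum>i<s. \<Sum>k<s. \<bar>B i k\<bar>) + 1"]
    proof eventually_elim
      case (elim \<zeta>)
      show ?case using corr_eq[where c=c and M=M and m=m and yp="yp \<zeta>" and y="y \<zeta>", OF s SA c1 stages_props(1)[OF BA elim]] by simp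
    qed
  qed
qed

lemma main_lim:
  fixes A B :: "nat\<Rightarrow>nat\<Rightarrow>real"
  assumes BA: "\<forall>i<s. \<forall>j<s. (\<Sum>k<s. B i k * A k j) = (if i = j then 1 else 0)"
    and s: "s \<ge> 1" and SA: "\<forall>i<s. b i = A (s - 1) i" and c1: "c (s - 1) = 1"
  shows "\<forall>m. ((\<lambda>\<zeta>. indc_iter s A b c M \<zeta> k m / \<zeta>) \<longlongrightarrow> 0) at_infinity
           \<and> (m \<ge> 1 \<longrightarrow> ((\<lambda>\<zeta>. indc_iter s A b c M \<zeta> k m) \<longlongrightarrow> 0) at_infinity)"
proof (induction k)
  case 0
  have "((\<lambda>\<zeta>. (irk_step s A b \<zeta> ^^ m) 1 / \<zeta>) \<longlongrightarrow> 0) at_infinity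
           \<and> (m \<ge> 1 \<longrightarrow> ((\<lambda>\<zeta>. (irk_step s A b \<zeta> ^^ m) 1) \<longlongrightarrow> 0) at_infinity)" for m
  proof (induction m)
    case 0
    then show ?case by (simp add: div_lim[OF tendsto_const])
  next
    case (Suc m)
    have "((\<lambda>\<zeta>. irk_step s A b \<zeta> ((irk_step s A b \<zeta> ^^ m) 1)) \<longlongrightarrow> 0) at_infinity"
      using Suc by (intro irk_lim[OF BA s SA]) auto
    then show ?case using div_lim by auto
  qed
  then show ?case by simp
next
  case (Suc k)
  have hyp: "\<forall>j\<in>{1..M}. ((\<lambda>\<zeta>. indc_iter s A b c M \<zeta> k j) \<longlongrightarrow> 0) at_infinity"
    using Suc.IH by auto
  have "((\<lambda>\<zeta>. corr_sweep s A b c M \<zeta> (indc_iter s A b c M \<zeta> k) m / \<zeta>) \<longlongrightarrow> 0) at_infinity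
      \<and> (m \<ge> 1 \<longrightarrow> ((\<lambda>\<zeta>. corr_sweep s A b c M \<zeta> (indc_iter s A b c M \<zeta> k) m) \<longlongrightarrow> 0) at_infinity)" for m
  proof (induction m)
    case 0
    then show ?case by (simp add: div_lim[OF tendsto_const])
  next
    case (Suc m)
    have "((\<lambda>\<zeta>. corr_step s A b c M \<zeta> (indc_iter s A b c M \<zeta> k) m
              (corr_sweep s A b c M \<zeta> (indc_iter s A b c M \<zeta> k) m)) \<longlongrightarrow> 0) at_infinity"
      using Suc by (intro corr_lim[where c=c and s=s and A=A and b=b and B=B and M=M, OF BA s SA c1, where yp = "\<lambda>\<zeta>. indc_iter s A b c M \<zeta> k", OF _ hyp]) auto
    then show ?case using div_lim by auto
  qed
  then show ?case by simp
qed

lemma filterlim_divM: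
  assumes "M \<ge> (1::nat)"
  shows "filterlim (\<lambda>z::complex. z / of_nat M) at_infinity at_infinity"
proof -
  have "\<forall>r>0. eventually (\<lambda>z::complex. r \<le> norm (z / of_nat M)) at_infinity"
  proof (intro allI impI)
    fix r :: real assume "r > 0"
    have M: "real M > 0" using assms by simp
    show "eventually (\<lambda>z::complex. r \<le> norm (z / of_nat M)) at_infinity"
      unfolding eventually_at_infinity
    proof (intro exI allI impI)
      fix z :: complex assume "r * real M \<le> norm z"
      then show "r \<le> norm (z / of_nat M)" using M by (simp add: norm_divide field_simps)
    qed
  qed
  then show ?thesis by (subst filterlim_at_infinity[of 0]) auto
qed

theorem proposition5p1:
  fixes s M K :: nat and A :: "nat \<Rightarrow> nat \<Rightarrow> real" and b c :: "nat \<Rightarrow> real"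
  assumes "s \<ge> 1" and "M \<ge> 1"
    and row_sum: "\<forall>i<s. c i = (\<Sum>j<s. A i j)"
    and consistent: "(\<Sum>i<s. b i) = 1"
    and stiffly_accurate: "\<forall>i<s. b i = A (s - 1) i"
    and nonsingular: "Determinant.det (Matrix.mat s s (\<lambda>(i, j). A i j)) \<noteq> 0"
  shows "((indc_R s A b c M K) \<longlongrightarrow> 0) at_infinity
         \<and> (A_stable (indc_R s A b c M K) \<longrightarrow> L_stable (indc_R s A b c M K))"
proof -
  obtain B where BA: "\<forall>i<s. \<forall>j<s. (\<Sum>k<s. B i k * A k j) = (if i = j then 1 else 0)"
    using left_inv[OF nonsingular] by blast
  have c1: "c (s - 1) = 1"
  proof -
    have "c (s - 1) = (\<Sum>j<s. A (s - 1) j)" using row_sum assms(1) by simp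
    also have "\<dots> = (\<Sum>j<s. b j)" using stiffly_accurate by simp
    finally show ?thesis using consistent by simp
  qed
  have lim: "((\<lambda>\<zeta>. indc_iter s A b c M \<zeta> K M) \<longlongrightarrow> 0) at_infinity"
    using main_lim[where c=c and M=M and k=K, OF BA assms(1) stiffly_accurate c1] assms(2) by blast
  have eq: "indc_R s A b c M K = (\<lambda>z. indc_iter s A b c M (z / of_nat M) K M)"
    by (rule ext) (simp add: indc_R_def)
  have "((indc_R s A b c M K) \<longlongrightarrow> 0) at_infinity"
    unfolding eq using filterlim_compose[OF lim filterlim_divM[OF assms(2)]] .
  then show ?thesis unfolding L_stable_def by blast
qed

end
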